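(* Let $n$ be a positive integer, $0\le m\le\lfloor n/2\rfloor$ and $0\le k\le m$. Let $M^{(n-m,m)}$ be the complex vector space with basis $\{e_\sigma\}$ indexed by the $m$-element subsets $\sigma$ of $\{1,\dots,n\}$, and let $\Omega=\{n-m+1,\dots,n\}$. Define the linear map $\pi:\mathbb{C}[S_n]\to M^{(n-m,m)}$ by $\pi(g)=e_{g(\Omega)}$ for $g\in S_n$. Let $T_k$ be the Young tableau of shape $(n-k,k)$ whose first row contains $1,\dots,n-k$ and whose second row contains $n-k+1,\dots,n$, with row subgroup $R(T_k)$ and column subgroup $C(T_k)$, and let $$c_k=\Big(\sum_{q\in C(T_k)}\operatorname{sgn}(q)\,q\Big)\Big(\sum_{p\in R(T_k)}p\Big)\in\mathbb{C}[S_n].$$ Then the coefficient of $e_\Omega$ in $\pi(c_k)$ is $(m-k)!\,k!\,(n-m)!$.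
   Context: The row subgroup $R(T_k)$ (resp. column subgroup $C(T_k)$) consists of the permutations of $\{1,\dots,n\}$ that preserve each row (resp. each column) of $T_k$ as a set. Products in the group ring are composition of permutations, $qp=q\circ p$. *)

theory Defs
  imports Complex_Main "HOL-Combinatorics.Permutations"
begin

definition Sym :: "nat \<Rightarrow> (nat \<Rightarrow> nat) set" where
  "Sym n = {g. g permutes {1..n}}"

text \<open>Elements of the group ring C[S_n] are functions from S_n to C
  (coefficient of each group element; zero outside S_n).\<close>
definition gr_mult :: "nat \<Rightarrow> ((nat \<Rightarrow> nat) \<Rightarrow> complex) \<Rightarrow> ((nat \<Rightarrow> nat) \<Rightarrow> complex)
    \<Rightarrow> ((nat \<Rightarrow> nat) \<Rightarrow> complex)" where
  "gr_mult n a b = (\<lambda>g. \<Sum>qp\<in>Sym n \<times> Sym n. if fst qp \<circ> snd qp = g then a (fst qp) * b (snd qp) else 0)"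

definition Omega :: "nat \<Rightarrow> nat \<Rightarrow> nat set" where
  "Omega n m = {n - m + 1..n}"

text \<open>An element of M^(n-m,m) is represented by its coefficient function on
  m-subsets sigma of {1..n}: pi_map n m a sigma is the coefficient of e_sigma.\<close>
definition pi_map :: "nat \<Rightarrow> nat \<Rightarrow> ((nat \<Rightarrow> nat) \<Rightarrow> complex) \<Rightarrow> nat set \<Rightarrow> complex" where
  "pi_map n m a = (\<lambda>\<sigma>. \<Sum>g\<in>Sym n. if g ` Omega n m = \<sigma> then a g else 0)"

definition cells :: "nat \<Rightarrow> nat \<Rightarrow> (nat \<times> nat) set" where
  "cells n k = {(1, j) | j. 1 \<le> j \<and> j \<le> n - k} \<union> {(2, j) | j. 1 \<le> j \<and> j \<le> k}"

definition T :: "nat \<Rightarrow> nat \<Rightarrow> nat \<times> nat \<Rightarrow> nat" where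
  "T n k c = (if fst c = 1 then snd c else n - k + snd c)"

definition tab_row :: "nat \<Rightarrow> nat \<Rightarrow> nat \<Rightarrow> nat set" where
  "tab_row n k i = {T n k c | c. c \<in> cells n k \<and> fst c = i}"

definition tab_col :: "nat \<Rightarrow> nat \<Rightarrow> nat \<Rightarrow> nat set" where
  "tab_col n k j = {T n k c | c. c \<in> cells n k \<and> snd c = j}"

definition row_group :: "nat \<Rightarrow> nat \<Rightarrow> (nat \<Rightarrow> nat) set" where
  "row_group n k = {p \<in> Sym n. \<forall>i. p ` tab_row n k i = tab_row n k i}"

definition col_group :: "nat \<Rightarrow> nat \<Rightarrow> (nat \<Rightarrow> nat) set" where
  "col_group n k = {q \<in> Sym n. \<forall>j. q ` tab_col n k j = tab_col n k j}"

definition col_antisym :: "nat \<Rightarrow> nat \<Rightarrow> (nat \<Rightarrow> nat) \<Rightarrow> complex" where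
  "col_antisym n k = (\<lambda>q. if q \<in> col_group n k then of_int (sign q) else 0)"

definition row_sym :: "nat \<Rightarrow> nat \<Rightarrow> (nat \<Rightarrow> nat) \<Rightarrow> complex" where
  "row_sym n k = (\<lambda>p. if p \<in> row_group n k then 1 else 0)"

definition young_c :: "nat \<Rightarrow> nat \<Rightarrow> (nat \<Rightarrow> nat) \<Rightarrow> complex" where
  "young_c n k = gr_mult n (col_antisym n k) (row_sym n k)"

end

theory Submission imports Defs begin

lemma perm_block_card:
  assumes fA: "finite A" and fB: "finite B" and dj: "A \<inter> B = {}"
  shows "card {p. p permutes (A \<union> B) \<and> p ` A = A \<and> Q (\<lambda>x. if x \<in> B then p x else x)}
         = fact (card A) * card {g. g permutes B \<and> Q g}"
proof -
  let ?F = "{f. f permutes A}"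
  let ?G = "{g. g permutes B \<and> Q g}"
  let ?P = "{p. p permutes (A \<union> B) \<and> p ` A = A \<and> Q (\<lambda>x. if x \<in> B then p x else x)}"
  have inj: "inj_on (\<lambda>(f,g). f \<circ> g) (?F \<times> ?G)"
  proof (rule inj_onI, clarify)
    fix f1 g1 f2 g2
    assume f1: "f1 permutes A" and g1: "g1 permutes B" and f2: "f2 permutes A" and g2: "g2 permutes B"
      and eq: "f1 \<circ> g1 = f2 \<circ> g2"
    have "g1 x = g2 x" for x
    proof (cases "x \<in> B")
      case True
      then have "g1 x \<in> B" "g2 x \<in> B" using g1 g2 permutes_in_image by metis+
      then have "g1 x \<notin> A" "g2 x \<notin> A" using dj by auto
      then have "f1 (g1 x) = g1 x" "f2 (g2 x) = g2 x" using f1 f2 permutes_not_in by metis+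
      then show ?thesis using eq by (metis comp_apply)
    next
      case False
      then show ?thesis using g1 g2 permutes_not_in by metis
    qed
    then have gg: "g1 = g2" by auto
    have "f1 x = f2 x" for x
    proof (cases "x \<in> A")
      case True
      then have "x \<notin> B" using dj by auto
      then have "g1 x = x" using g1 permutes_not_in by metis
      then show ?thesis using eq gg by (metis comp_apply)
    next
      case False
      then show ?thesis using f1 f2 permutes_not_in by metis
    qed
    then show "f1 = f2 \<and> g1 = g2" using gg by auto
  qed
  have img: "(\<lambda>(f,g). f \<circ> g) ` (?F \<times> ?G) = ?P"
  proof
    show "(\<lambda>(f,g). f \<circ> g) ` (?F \<times> ?G) \<subseteq> ?P"
    proof clarify
      fix f g assume f: "f permutes A" and g: "g permutes B" and Qg: "Q g"
      have "f \<circ> g permutes (A \<union> B)"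
        by (rule permutes_compose) (auto intro: permutes_subset[OF g] permutes_subset[OF f])
      moreover have "g ` A = A"
      proof -
        have "\<forall>x\<in>A. g x = x" using g dj permutes_not_in by (metis disjoint_iff)
        then show ?thesis by simp
      qed
      then have "(f \<circ> g) ` A = A" using permutes_image[OF f] by (metis image_comp)
      moreover have "(\<lambda>x. if x \<in> B then (f \<circ> g) x else x) = g"
      proof
        fix x show "(if x \<in> B then (f \<circ> g) x else x) = g x"
        proof (cases "x \<in> B")
          case True
          then have "g x \<in> B" using g permutes_in_image by metis
          then have "g x \<notin> A" using dj by auto
          then show ?thesis using True f permutes_not_in by (metis comp_apply)
        next
          case False then show ?thesis using g permutes_not_in by metis
        qed
      qed
      ultimately show "f \<circ> g permutes (A \<union> B) \<and> (f \<circ> g) ` A = A \<and> Q (\<lambda>x. if x \<in> B then (f \<circ> g) x else x)"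
        using Qg by simp
    qed
  next
    show "?P \<subseteq> (\<lambda>(f,g). f \<circ> g) ` (?F \<times> ?G)"
    proof
      fix p assume "p \<in> ?P"
      then have p: "p permutes (A \<union> B)" and pA: "p ` A = A" and Qp: "Q (\<lambda>x. if x \<in> B then p x else x)" by auto
      have injp: "inj p" using p permutes_inj by metis
      have pB: "p ` B = B"
      proof -
        have "B = (A \<union> B) - A" using dj by auto
        then have "p ` B = p ` (A \<union> B) - p ` A" using injp image_set_diff by metis
        then show ?thesis using pA permutes_image[OF p] dj by auto
      qed
      define f where "f = (\<lambda>x. if x \<in> A then p x else x)"
      define g where "g = (\<lambda>x. if x \<in> B then p x else x)"
      have "bij_betw p A A" using injp pA by (simp add: bij_betw_def inj_on_subset[OF injp])
      then have "bij_betw f A A" unfolding f_def by (rule bij_betw_cong[THEN iffD1, rotated]) simp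
      then have fp: "f permutes A" by (rule bij_imp_permutes) (simp add: f_def)
      have "bij_betw p B B" using injp pB by (simp add: bij_betw_def inj_on_subset[OF injp])
      then have "bij_betw g B B" unfolding g_def by (rule bij_betw_cong[THEN iffD1, rotated]) simp
      then have gp: "g permutes B" by (rule bij_imp_permutes) (simp add: g_def)
      have "p = f \<circ> g"
      proof
        fix x show "p x = (f \<circ> g) x"
        proof (cases "x \<in> B")
          case True
          then have "p x \<in> B" using pB by auto
          then have "p x \<notin> A" using dj by auto
          then show ?thesis using True by (simp add: f_def g_def)
        next
          case False
          show ?thesis
          proof (cases "x \<in> A")
            case True then show ?thesis using False by (simp add: f_def g_def)
          next
            case False2: False
            then have "p x = x" using False p permutes_not_in by (metis Un_iff)
            then show ?thesis using False False2 by (simp add: f_def g_def)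
          qed
        qed
      qed
      moreover have "Q g" using Qp by (simp add: g_def)
      ultimately show "p \<in> (\<lambda>(f,g). f \<circ> g) ` (?F \<times> ?G)" using fp gp by auto
    qed
  qed
  have "card ?P = card (?F \<times> ?G)" using inj img card_image by fastforce
  also have "\<dots> = card ?F * card ?G" by (rule card_cartesian_product)
  also have "card ?F = fact (card A)" using card_permutations fA by blast
  finally show ?thesis .
qed


lemma tab_row_1: "k \<le> n \<Longrightarrow> tab_row n k 1 = {1..n-k}"
  unfolding tab_row_def cells_def T_def by force

lemma tab_row_2: "k \<le> n \<Longrightarrow> tab_row n k 2 = {n-k+1..n}"
proof -
  assume kn: "k \<le> n"
  have "x \<in> tab_row n k 2" if "x \<in> {n-k+1..n}" for x
    unfolding tab_row_def cells_def T_def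
    using that kn by (intro CollectI exI[of _ "(2, x - (n-k))"]) auto
  moreover have "x \<in> {n-k+1..n}" if "x \<in> tab_row n k 2" for x
    using that kn unfolding tab_row_def cells_def T_def by auto
  ultimately show ?thesis by blast
qed

lemma tab_row_other: "i \<noteq> 1 \<Longrightarrow> i \<noteq> 2 \<Longrightarrow> tab_row n k i = {}"
  unfolding tab_row_def cells_def by auto

lemma row_group_iff: "k \<le> n \<Longrightarrow> p \<in> row_group n k \<longleftrightarrow>
   p \<in> Sym n \<and> p ` {1..n-k} = {1..n-k} \<and> p ` {n-k+1..n} = {n-k+1..n}"
proof -
  assume kn: "k \<le> n"
  have "(\<forall>i. p ` tab_row n k i = tab_row n k i) \<longleftrightarrow>
      p ` {1..n-k} = {1..n-k} \<and> p ` {n-k+1..n} = {n-k+1..n}"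
  proof
    assume h: "\<forall>i. p ` tab_row n k i = tab_row n k i"
    have "p ` tab_row n k 1 = tab_row n k 1" "p ` tab_row n k 2 = tab_row n k 2" using h by blast+
    then show "p ` {1..n-k} = {1..n-k} \<and> p ` {n-k+1..n} = {n-k+1..n}"
      by (simp only: tab_row_1[OF kn] tab_row_2[OF kn])
  next
    assume h: "p ` {1..n-k} = {1..n-k} \<and> p ` {n-k+1..n} = {n-k+1..n}"
    show "\<forall>i. p ` tab_row n k i = tab_row n k i"
    proof
      fix i :: nat
      consider "i = 1" | "i = 2" | "i \<noteq> 1 \<and> i \<noteq> 2" by blast
      then show "p ` tab_row n k i = tab_row n k i"
      proof cases
        case 1 then show ?thesis using h by (simp only: 1 tab_row_1[OF kn])
      next
        case 2 then show ?thesis using h by (simp only: 2 tab_row_2[OF kn])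
      next
        case 3 then show ?thesis by (simp add: tab_row_other)
      qed
    qed
  qed
  then show ?thesis unfolding row_group_def by blast
qed

lemma tab_col_small: "1 \<le> j \<Longrightarrow> j \<le> k \<Longrightarrow> k \<le> n - k \<Longrightarrow> tab_col n k j = {j, n-k+j}"
  unfolding tab_col_def cells_def T_def
proof -
  assume a: "1 \<le> j" "j \<le> k" "k \<le> n - k"
  show "{if fst c = 1 then snd c else n - k + snd c |c.
     c \<in> {(1::nat, j) |j. 1 \<le> j \<and> j \<le> n - k} \<union> {(2, j) |j. 1 \<le> j \<and> j \<le> k} \<and> snd c = j} = {j, n - k + j}"
    (is "?L = ?R")
  proof
    show "?L \<subseteq> ?R" by auto
    show "?R \<subseteq> ?L"
    proof
      fix x assume "x \<in> ?R"
      then consider "x = j" | "x = n-k+j" by auto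
      then show "x \<in> ?L"
      proof cases
        case 1 then show ?thesis using a by (intro CollectI exI[of _ "(1, j)"]) auto
      next
        case 2 then show ?thesis using a by (intro CollectI exI[of _ "(2, j)"]) auto
      qed
    qed
  qed
qed

lemma tab_col_big: "k < j \<Longrightarrow> j \<le> n - k \<Longrightarrow> tab_col n k j = {j}"
  unfolding tab_col_def cells_def T_def by force

lemma q_id:
  assumes kn: "k \<le> n - k" and km: "k \<le> m" and mk: "k \<le> n - m" and mn: "m \<le> n"
    and q: "q \<in> col_group n k" and p: "p \<in> row_group n k"
    and qp: "(q \<circ> p) ` Omega n m = Omega n m"
  shows "q = id"
proof -
  have qperm: "q permutes {1..n}" using q by (simp add: col_group_def Sym_def)
  have qc: "q ` tab_col n k j = tab_col n k j" for j using q by (simp add: col_group_def)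
  have pr2: "p ` {n-k+1..n} = {n-k+1..n}" using p row_group_iff kn by auto
  have sub: "{n-k+1..n} \<subseteq> Omega n m" using km mn kn unfolding Omega_def by auto
  have hi: "q (n-k+j) = n-k+j" if j: "1 \<le> j" "j \<le> k" for j
  proof -
    have "n-k+j \<in> {n-k+1..n}" using j kn by auto
    then have "n-k+j \<in> p ` {n-k+1..n}" using pr2 by simp
    then have "n-k+j \<in> p ` Omega n m" using image_mono[OF sub, of p] by (rule subsetD[rotated])
    then have "q (n-k+j) \<in> q ` (p ` Omega n m)" by (rule imageI)
    moreover have "q ` (p ` Omega n m) = Omega n m" using qp by (simp add: image_comp)
    ultimately have "q (n-k+j) \<in> Omega n m" by simp
    moreover have "q (n-k+j) \<in> {j, n-k+j}" using qc[of j] tab_col_small[OF j kn] by auto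
    moreover have "j \<notin> Omega n m" using j mk unfolding Omega_def by auto
    ultimately show ?thesis by auto
  qed
  have "q x = x" for x
  proof -
    consider "x \<notin> {1..n}" | "1 \<le> x \<and> x \<le> k" | "k < x \<and> x \<le> n - k" | "n - k < x \<and> x \<le> n"
      by (meson atLeastAtMost_iff not_le)
    then show ?thesis
    proof cases
      case 1 then show ?thesis using qperm permutes_not_in by metis
    next
      case 2
      then have j: "1 \<le> x" "x \<le> k" by auto
      have "q x \<in> {x, n-k+x}" using qc[of x] tab_col_small[OF j kn] by auto
      moreover have "q x \<noteq> n-k+x"
      proof
        assume "q x = n-k+x"
        then have "q x = q (n-k+x)" using hi[OF j] by simp
        then have "x = n-k+x" using permutes_inj[OF qperm] by (meson injD)
        then show False using j kn by auto
      qed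
      ultimately show ?thesis by auto
    next
      case 3 then show ?thesis using qc[of x] tab_col_big[of k x n] by auto
    next
      case 4
      then have "1 \<le> x - (n-k)" "x - (n-k) \<le> k" by auto
      from hi[OF this] show ?thesis using 4 by auto
    qed
  qed
  then show ?thesis by auto
qed


lemma id_col: "id \<in> col_group n k"
  unfolding col_group_def Sym_def by simp

lemma finite_Sym: "finite (Sym n)"
  unfolding Sym_def by (rule finite_permutations) simp

lemma count_S:
  assumes kn: "k \<le> n - k" and km: "k \<le> m" and mk: "k \<le> n - m" and mn: "m \<le> n"
  shows "card {p \<in> row_group n k. p ` Omega n m = Omega n m} = fact (m - k) * fact k * fact (n - m)"
proof -
  define X1 where "X1 = {1..n-m}"
  define X2 where "X2 = {n-m+1..n-k}"
  define X3 where "X3 = {n-k+1..n}"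
  have U: "X1 \<union> (X2 \<union> X3) = {1..n}" unfolding X1_def X2_def X3_def using kn km mk mn by auto
  have set_eq: "{p \<in> row_group n k. p ` Omega n m = Omega n m}
     = {p. p permutes (X1 \<union> (X2 \<union> X3)) \<and> p ` X1 = X1 \<and> (\<lambda>g. g ` X2 = X2) (\<lambda>x. if x \<in> X2 \<union> X3 then p x else x)}"
  proof (rule set_eqI)
    fix p
    have r: "(\<lambda>x. if x \<in> X2 \<union> X3 then p x else x) ` X2 = p ` X2" by (rule image_cong) auto
    show "p \<in> {p \<in> row_group n k. p ` Omega n m = Omega n m} \<longleftrightarrow>
      p \<in> {p. p permutes (X1 \<union> (X2 \<union> X3)) \<and> p ` X1 = X1 \<and> (\<lambda>g. g ` X2 = X2) (\<lambda>x. if x \<in> X2 \<union> X3 then p x else x)}"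
    proof (cases "p permutes {1..n}")
      case False
      then show ?thesis using U row_group_iff[of k n p] kn by (auto simp: Sym_def)
    next
      case True
      have injp: "inj p" using True permutes_inj by metis
      have pU: "p ` {1..n} = {1..n}" using True permutes_image by metis
      have e1: "{1..n-k} = X1 \<union> X2" unfolding X1_def X2_def using kn km mk mn by auto
      have e2: "{n-k+1..n} = {1..n} - (X1 \<union> X2)" unfolding X1_def X2_def using kn km mk mn by auto
      have e3: "Omega n m = {1..n} - X1" unfolding X1_def Omega_def using kn km mk mn by auto
      have e4: "X1 = {1..n-k} - Omega n m" unfolding X1_def Omega_def using kn km mk mn by auto
      have e5: "X2 = {1..n-k} \<inter> Omega n m" unfolding X2_def Omega_def using kn km mk mn by auto
      have "(p ` {1..n-k} = {1..n-k} \<and> p ` {n-k+1..n} = {n-k+1..n} \<and> p ` Omega n m = Omega n m)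
            \<longleftrightarrow> (p ` X1 = X1 \<and> p ` X2 = X2)"
      proof
        assume h: "p ` {1..n-k} = {1..n-k} \<and> p ` {n-k+1..n} = {n-k+1..n} \<and> p ` Omega n m = Omega n m"
        have "p ` X1 = X1" unfolding e4 using h image_set_diff[OF injp] by metis
        moreover have "p ` X2 = X2" unfolding e5 using h image_Int[OF injp] by metis
        ultimately show "p ` X1 = X1 \<and> p ` X2 = X2" by simp
      next
        assume h: "p ` X1 = X1 \<and> p ` X2 = X2"
        have a1: "p ` {1..n-k} = {1..n-k}" unfolding e1 using h by (simp add: image_Un)
        have a2: "p ` {n-k+1..n} = {n-k+1..n}" unfolding e2 using h pU image_set_diff[OF injp] image_Un by metis
        have a3: "p ` Omega n m = Omega n m" unfolding e3 using h pU image_set_diff[OF injp] by metis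
        show "p ` {1..n-k} = {1..n-k} \<and> p ` {n-k+1..n} = {n-k+1..n} \<and> p ` Omega n m = Omega n m"
          using a1 a2 a3 by simp
      qed
      then show ?thesis using True U row_group_iff[of k n p] kn r by (auto simp: Sym_def)
    qed
  qed
  have fin: "finite X1" "finite X2" "finite X3" unfolding X1_def X2_def X3_def by auto
  have dj1: "X1 \<inter> (X2 \<union> X3) = {}" unfolding X1_def X2_def X3_def using kn km mk mn by auto
  have dj2: "X2 \<inter> X3 = {}" unfolding X2_def X3_def using kn km mk mn by auto
  have c1: "card X1 = n - m" "card X2 = m - k" "card X3 = k" unfolding X1_def X2_def X3_def
    using kn km mk mn by auto
  have inner: "card {g. g permutes (X2 \<union> X3) \<and> g ` X2 = X2} = fact (m - k) * fact k"
  proof -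
    have "card {g. g permutes (X2 \<union> X3) \<and> g ` X2 = X2 \<and> (\<lambda>_. True) (\<lambda>x. if x \<in> X3 then g x else x)}
        = fact (card X2) * card {g. g permutes X3 \<and> (\<lambda>_. True) g}"
      by (rule perm_block_card[OF fin(2) fin(3) dj2, where Q="\<lambda>_. True"])
    then show ?thesis using card_permutations[OF c1(3) fin(3)] c1 by simp
  qed
  have "card {p \<in> row_group n k. p ` Omega n m = Omega n m} = fact (card X1) * card {g. g permutes (X2 \<union> X3) \<and> g ` X2 = X2}"
    unfolding set_eq by (rule perm_block_card[OF fin(1) _ dj1, where Q="\<lambda>g. g ` X2 = X2"]) (use fin in auto)
  also have "\<dots> = fact (n - m) * (fact (m - k) * fact k)" by (simp only: inner c1(1))
  finally show ?thesis by (simp only: mult.commute mult.left_commute)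
qed


theorem lemma5:
  fixes n m k :: nat
  assumes "0 < n" and "m \<le> n div 2" and "k \<le> m"
  shows "pi_map n m (young_c n k) (Omega n m) = of_nat (fact (m - k) * fact k * fact (n - m))"
proof -
  have km: "k \<le> m" using assms by simp
  have m2: "2 * m \<le> n" using assms(2) by presburger
  have mn: "m \<le> n" and mk: "k \<le> n - m" and kn: "k \<le> n - k" using m2 km by linarith+
  let ?Om = "Omega n m"
  let ?a = "col_antisym n k"
  let ?b = "row_sym n k"
  let ?S = "{p \<in> row_group n k. p ` Omega n m = Omega n m}"
  have fS: "finite (Sym n)" by (rule finite_Sym)
  have "pi_map n m (young_c n k) ?Om = (\<Sum>g\<in>Sym n. \<Sum>qp\<in>Sym n \<times> Sym n.
      if g ` ?Om = ?Om \<and> fst qp \<circ> snd qp = g then ?a (fst qp) * ?b (snd qp) else 0)"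
    unfolding pi_map_def young_c_def gr_mult_def
  proof (rule sum.cong[OF refl])
    fix g assume "g \<in> Sym n"
    show "(if g ` ?Om = ?Om then (\<Sum>qp\<in>Sym n \<times> Sym n. if fst qp \<circ> snd qp = g then ?a (fst qp) * ?b (snd qp) else 0) else 0)
      = (\<Sum>qp\<in>Sym n \<times> Sym n. if g ` ?Om = ?Om \<and> fst qp \<circ> snd qp = g then ?a (fst qp) * ?b (snd qp) else 0)"
      by (cases "g ` ?Om = ?Om") simp_all
  qed
  also have "\<dots> = (\<Sum>qp\<in>Sym n \<times> Sym n. \<Sum>g\<in>Sym n.
      if g ` ?Om = ?Om \<and> fst qp \<circ> snd qp = g then ?a (fst qp) * ?b (snd qp) else 0)"
    by (rule sum.swap)
  also have "\<dots> = (\<Sum>qp\<in>Sym n \<times> Sym n.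
      if (fst qp \<circ> snd qp) ` ?Om = ?Om then ?a (fst qp) * ?b (snd qp) else 0)"
  proof (rule sum.cong[OF refl])
    fix qp assume qp: "qp \<in> Sym n \<times> Sym n"
    have mem: "fst qp \<circ> snd qp \<in> Sym n" using qp unfolding Sym_def
      by (auto intro: permutes_compose)
    have "(\<Sum>g\<in>Sym n. if g ` ?Om = ?Om \<and> fst qp \<circ> snd qp = g then ?a (fst qp) * ?b (snd qp) else 0)
        = (\<Sum>g\<in>Sym n. if fst qp \<circ> snd qp = g then (if (fst qp \<circ> snd qp) ` ?Om = ?Om then ?a (fst qp) * ?b (snd qp) else 0) else 0)"
      by (rule sum.cong[OF refl]) auto
    also have "\<dots> = (if (fst qp \<circ> snd qp) ` ?Om = ?Om then ?a (fst qp) * ?b (snd qp) else 0)"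
      by (subst sum.delta'[OF fS]) (simp only: mem if_True)
    finally show "(\<Sum>g\<in>Sym n. if g ` ?Om = ?Om \<and> fst qp \<circ> snd qp = g then ?a (fst qp) * ?b (snd qp) else 0)
        = (if (fst qp \<circ> snd qp) ` ?Om = ?Om then ?a (fst qp) * ?b (snd qp) else 0)" .
  qed
  also have "\<dots> = (\<Sum>qp\<in>Sym n \<times> Sym n. if qp \<in> {id} \<times> ?S then 1 else 0)"
  proof (rule sum.cong[OF refl])
    fix qp assume qp: "qp \<in> Sym n \<times> Sym n"
    obtain q p where qpe: "qp = (q, p)" by fastforce
    show "(if (fst qp \<circ> snd qp) ` ?Om = ?Om then ?a (fst qp) * ?b (snd qp) else 0)
        = (if qp \<in> {id} \<times> ?S then 1 else 0)"
    proof (cases "q \<in> col_group n k \<and> p \<in> row_group n k \<and> (q \<circ> p) ` ?Om = ?Om")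
      case True
      then have "q = id" using q_id[OF kn km mk mn] by blast
      then show ?thesis using True qpe by (simp add: col_antisym_def row_sym_def)
    next
      case False
      have r: "qp \<notin> {id} \<times> ?S"
      proof
        assume "qp \<in> {id} \<times> ?S"
        then have "q = id" "p \<in> row_group n k" "p ` ?Om = ?Om" using qpe by auto
        then show False using False id_col by simp
      qed
      have l: "(if (q \<circ> p) ` ?Om = ?Om then ?a q * ?b p else 0) = 0"
        using False unfolding col_antisym_def row_sym_def by auto
      have r': "((q, p) \<in> {id} \<times> ?S) = False" using r qpe by simp
      show ?thesis unfolding qpe fst_conv snd_conv by (simp only: l r' if_False)
    qed
  qed
  also have "\<dots> = (\<Sum>qp\<in>(Sym n \<times> Sym n) \<inter> ({id} \<times> ?S). 1)"
    by (rule sum.inter_restrict[symmetric]) (simp add: fS)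
  also have "\<dots> = of_nat (fact (m - k) * fact k * fact (n - m))"
  proof -
    have "?S \<subseteq> Sym n" by (auto simp: row_group_def)
    moreover have "id \<in> Sym n" by (simp add: Sym_def)
    ultimately have e: "(Sym n \<times> Sym n) \<inter> ({id} \<times> ?S) = {id} \<times> ?S" by blast
    have c: "card ?S = fact (m - k) * fact k * fact (n - m)"
      by (rule count_S[OF kn km mk mn])
    have "(\<Sum>qp\<in>{id} \<times> ?S. (1::complex)) = of_nat (card ?S)"
      by (simp add: card_cartesian_product)
    then show ?thesis using e c by simp
  qed
  finally show ?thesis .
qed

end
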